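(* Let $G_1,\dots,G_k$ be finitely many graphs which are pairwise consistent, and let $\overline r_1,\dots,\overline r_k$ be pairwise consistent rotation sequences such that the graphs $\overline r_1G_1,\dots,\overline r_kG_k$ are pairwise consistent. Then there exists a rotation sequence $\overline r$ such that $$\bigcup_{i=1}^k\overline r_iG_i=\overline r\bigcup_{i=1}^kG_i.$$
   Context: Fix $n\ge1$, ports $\pi=\{0,\dots,n+1\}$, gluings the odd permutations of $\pi$. A graph $G$ has vertices $V(G)$, semi-edges $S(G)$ (elements $(u\!:\!p)$) and edges $E(G)$ (elements $(u\!:\!p,\gamma,v\!:\!q)$) such that: no $u\!:\!p$ is both a semi-edge and the start of an edge; at most one edge starts at each $u\!:\!p$; each vertex has exactly $n+1$ ports appearing in semi-edges or edges; if $(u\!:\!p,\gamma,v\!:\!q)$ is an edge then $\gamma$ maps the ports of $u$ onto those of $v$, $\gamma(p)=q$, and $(v\!:\!q,\gamma^{-1},u\!:\!p)$ is an edge. Graphs $G,H$ are consistent iff for all $u\in V(G)\cap V(H)$, $i\in\pi$, $v\in V(G)\cup V(H)$, $j\in\pi$ and gluing $\gamma$: ($(u\!:\!i,\gamma,v\!:\!j)\in E(G)$ or $(u\!:\!i)\in S(G)$) iff ($(u\!:\!i,\gamma,v\!:\!j)\in E(H)$ or $(u\!:\!i)\in S(H)$). The union of consistent graphs is taken componentwise on vertices, edges and semi-edges. For a vertex $u$ and an even permutation $\rho$ of $\pi$, the vertex rotation $\rho_u$ replaces each edge $(u\!:\!p,\gamma,v\!:\!q)$ by $(u\!:\!\rho(p),\gamma\circ\rho^{-1},v\!:\!q)$,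 each edge $(v\!:\!q,\gamma^{-1},u\!:\!p)$ by $(v\!:\!q,\rho\circ\gamma^{-1},u\!:\!\rho(p))$, each semi-edge $(u\!:\!p)$ by $(u\!:\!\rho(p))$, leaving the rest unchanged. A rotation sequence is a finite composition of vertex rotations. Since vertex rotations at distinct vertices commute, for a rotation sequence $\overline r$ and a vertex $u$ one defines $(\overline r/u)$ as the ordered composite of the vertex rotations of $\overline r$ acting at $u$. Two rotation sequences $\overline r_1,\overline r_2$ are consistent iff $(\overline r_1/u)=(\overline r_2/u)$ for every vertex $u$ on which both act. *)

theory Defs
  imports "HOL-Combinatorics.Permutations"
begin

definition ports_set :: "nat \<Rightarrow> nat set" where
  "ports_set n = {0..n+1}"

definition gluing :: "nat \<Rightarrow> (nat \<Rightarrow> nat) \<Rightarrow> bool" where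
  "gluing n \<gamma> \<longleftrightarrow> \<gamma> permutes ports_set n \<and> \<not> evenperm \<gamma>"

definition even_rot :: "nat \<Rightarrow> (nat \<Rightarrow> nat) \<Rightarrow> bool" where
  "even_rot n \<rho> \<longleftrightarrow> \<rho> permutes ports_set n \<and> evenperm \<rho>"

text \<open>A graph: vertices, semi-edges (u:p), edges (u:p, gamma, v:q).\<close>
record 'v graph =
  V :: "'v set"
  S :: "('v \<times> nat) set"
  E :: "('v \<times> nat \<times> (nat \<Rightarrow> nat) \<times> 'v \<times> nat) set"

definition vports :: "'v graph \<Rightarrow> 'v \<Rightarrow> nat set" where
  "vports G u = {p. (u, p) \<in> S G \<or> (\<exists>\<gamma> v q. (u, p, \<gamma>, v, q) \<in> E G)}"

definition is_graph :: "nat \<Rightarrow> 'v graph \<Rightarrow> bool" where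
  "is_graph n G \<longleftrightarrow>
     (\<forall>(u, p) \<in> S G. u \<in> V G \<and> p \<in> ports_set n) \<and>
     (\<forall>(u, p, \<gamma>, v, q) \<in> E G. u \<in> V G \<and> v \<in> V G \<and> p \<in> ports_set n \<and>
          q \<in> ports_set n \<and> gluing n \<gamma>) \<and>
     (\<forall>u p \<gamma> v q. (u, p, \<gamma>, v, q) \<in> E G \<longrightarrow> (u, p) \<notin> S G) \<and>
     (\<forall>u p \<gamma> v q \<gamma>' v' q'. (u, p, \<gamma>, v, q) \<in> E G \<longrightarrow> (u, p, \<gamma>', v', q') \<in> E G \<longrightarrow>
          \<gamma> = \<gamma>' \<and> v = v' \<and> q = q') \<and>
     (\<forall>u \<in> V G. card (vports G u) = n + 1) \<and>
     (\<forall>u p \<gamma> v q. (u, p, \<gamma>, v, q) \<in> E G \<longrightarrow>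
          \<gamma> ` vports G u = vports G v \<and> \<gamma> p = q \<and> (v, q, inv \<gamma>, u, p) \<in> E G)"

definition consistent :: "nat \<Rightarrow> 'v graph \<Rightarrow> 'v graph \<Rightarrow> bool" where
  "consistent n G H \<longleftrightarrow>
     (\<forall>u \<in> V G \<inter> V H. \<forall>i \<in> ports_set n. \<forall>v \<in> V G \<union> V H. \<forall>j \<in> ports_set n.
        \<forall>\<gamma>. gluing n \<gamma> \<longrightarrow>
          (((u, i, \<gamma>, v, j) \<in> E G \<or> (u, i) \<in> S G) \<longleftrightarrow>
           ((u, i, \<gamma>, v, j) \<in> E H \<or> (u, i) \<in> S H)))"

definition graph_Union :: "'i set \<Rightarrow> ('i \<Rightarrow> 'v graph) \<Rightarrow> 'v graph" where
  "graph_Union I G = \<lparr> V = (\<Union>i\<in>I. V (G i)), S = (\<Union>i\<in>I. S (G i)), E = (\<Union>i\<in>I. E (G i)) \<rparr>"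

text \<open>For an edge (a:p, gamma, b:q): the start port is rotated
if a = u, the end port if b = u, and the gluing is adjusted accordingly; this covers
both replacement rules of the definition (and loops at u).\<close>
definition vrot :: "'v \<Rightarrow> (nat \<Rightarrow> nat) \<Rightarrow> 'v graph \<Rightarrow> 'v graph" where
  "vrot u \<rho> G = \<lparr> V = V G,
     S = (\<lambda>(a, p). (a, if a = u then \<rho> p else p)) ` S G,
     E = (\<lambda>(a, p, \<gamma>, b, q).
            (a, if a = u then \<rho> p else p,
             (if b = u then \<rho> else id) \<circ> \<gamma> \<circ> (if a = u then inv \<rho> else id),
             b, if b = u then \<rho> q else q)) ` E G \<rparr>"

text \<open>A rotation sequence is a finite list of vertex rotations, applied from the
head of the list onwards.\<close>
type_synonym 'v rotseq = "('v \<times> (nat \<Rightarrow> nat)) list"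

definition is_rotseq :: "nat \<Rightarrow> 'v rotseq \<Rightarrow> bool" where
  "is_rotseq n rs \<longleftrightarrow> (\<forall>(u, \<rho>) \<in> set rs. even_rot n \<rho>)"

definition apply_rotseq :: "'v rotseq \<Rightarrow> 'v graph \<Rightarrow> 'v graph" where
  "apply_rotseq rs G = foldl (\<lambda>H (u, \<rho>). vrot u \<rho> H) G rs"

text \<open>(r/u): the ordered composite of the rotations of r at u (in application order).\<close>
definition rot_at :: "'v rotseq \<Rightarrow> 'v \<Rightarrow> (nat \<Rightarrow> nat)" where
  "rot_at rs u = foldl (\<lambda>acc (w, \<rho>). if w = u then \<rho> \<circ> acc else acc) id rs"

definition acts_on :: "'v rotseq \<Rightarrow> 'v \<Rightarrow> bool" where
  "acts_on rs u \<longleftrightarrow> u \<in> fst ` set rs"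

definition rotseq_consistent :: "'v rotseq \<Rightarrow> 'v rotseq \<Rightarrow> bool" where
  "rotseq_consistent r1 r2 \<longleftrightarrow>
     (\<forall>u. acts_on r1 u \<and> acts_on r2 u \<longrightarrow> rot_at r1 u = rot_at r2 u)"

end

theory Submission
  imports Defs
begin

definition rotate_by :: "('v \<Rightarrow> nat \<Rightarrow> nat) \<Rightarrow> 'v graph \<Rightarrow> 'v graph" where
  "rotate_by R G = \<lparr> V = V G,
     S = (\<lambda>(a, p). (a, R a p)) ` S G,
     E = (\<lambda>(a, p, \<gamma>, b, q). (a, R a p, R b \<circ> \<gamma> \<circ> inv (R a), b, R b q)) ` E G \<rparr>"

definition wfg :: "nat \<Rightarrow> 'v graph \<Rightarrow> bool" where
  "wfg n G \<longleftrightarrow>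
     (\<forall>(u, p) \<in> S G. u \<in> V G \<and> p \<in> ports_set n) \<and>
     (\<forall>(u, p, \<gamma>, v, q) \<in> E G. u \<in> V G \<and> v \<in> V G \<and> p \<in> ports_set n \<and>
          q \<in> ports_set n \<and> gluing n \<gamma>) \<and>
     (\<forall>u p \<gamma> v q. (u, p, \<gamma>, v, q) \<in> E G \<longrightarrow> (u, p) \<notin> S G) \<and>
     (\<forall>u p \<gamma> v q \<gamma>' v' q'. (u, p, \<gamma>, v, q) \<in> E G \<longrightarrow> (u, p, \<gamma>', v', q') \<in> E G \<longrightarrow>
          \<gamma> = \<gamma>' \<and> v = v' \<and> q = q')"

lemma is_graph_wfg: "is_graph n G \<Longrightarrow> wfg n G"
  unfolding is_graph_def wfg_def by (elim conjE) (intro conjI; assumption)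

lemma even_rot_comp: "even_rot n a \<Longrightarrow> even_rot n b \<Longrightarrow> even_rot n (a \<circ> b)"
  unfolding even_rot_def ports_set_def
  by (metis evenperm_comp finite_atLeastAtMost permutes_compose permutes_imp_permutation)

lemma even_rot_id: "even_rot n id"
  unfolding even_rot_def by (simp add: permutes_id)

lemma gluing_conj: "even_rot n a \<Longrightarrow> even_rot n b \<Longrightarrow> gluing n g \<Longrightarrow> gluing n (a \<circ> g \<circ> inv b)"
  unfolding even_rot_def gluing_def ports_set_def
  by (metis evenperm_comp evenperm_inv finite_atLeastAtMost permutes_compose permutes_inv permutes_imp_permutation)

lemma rot_at_snoc: "rot_at (rs @ [(w, \<rho>)]) = (\<lambda>u. if w = u then \<rho> \<circ> rot_at rs u else rot_at rs u)"
  unfolding rot_at_def by auto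

lemma rot_at_even: "is_rotseq n rs \<Longrightarrow> even_rot n (rot_at rs u)"
proof (induction rs rule: rev_induct)
  case Nil then show ?case using even_rot_id by (simp add: rot_at_def id_def)
next
  case (snoc x xs)
  obtain w \<rho> where x: "x = (w, \<rho>)" by fastforce
  have "is_rotseq n xs" "even_rot n \<rho>" using snoc.prems x unfolding is_rotseq_def by auto
  then show ?case using snoc.IH x by (simp add: rot_at_snoc even_rot_comp)
qed

lemma even_rot_bij: "even_rot n a \<Longrightarrow> bij a"
  unfolding even_rot_def using permutes_bij by blast

lemma vrot_rotate_by:
  assumes "bij \<rho>" "\<And>x. bij (R x)"
  shows "vrot u \<rho> (rotate_by R G) = rotate_by (\<lambda>x. if u = x then \<rho> \<circ> R x else R x) G"
proof -
  have i: "inv (\<rho> \<circ> R u) = inv (R u) \<circ> inv \<rho>" using assms o_inv_distrib by blast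
  show ?thesis
    unfolding vrot_def rotate_by_def
    by (auto simp: image_image i comp_assoc intro!: image_cong)
qed

lemma apply_rotseq_rotate_by:
  "is_rotseq n rs \<Longrightarrow> apply_rotseq rs G = rotate_by (rot_at rs) G"
proof (induction rs rule: rev_induct)
  case Nil
  have "rotate_by (\<lambda>_. id) G = G" unfolding rotate_by_def by (cases G) auto
  then show ?case by (simp add: apply_rotseq_def rot_at_def id_def)
next
  case (snoc x xs)
  obtain w \<rho> where x: "x = (w, \<rho>)" by fastforce
  have "is_rotseq n xs" "even_rot n \<rho>" using snoc.prems x unfolding is_rotseq_def by auto
  then have "apply_rotseq (xs @ [x]) G = vrot w \<rho> (rotate_by (rot_at xs) G)"
    using snoc.IH x by (simp add: apply_rotseq_def)
  also have "\<dots> = rotate_by (rot_at (xs @ [x])) G"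
    using vrot_rotate_by[OF even_rot_bij[OF \<open>even_rot n \<rho>\<close>]
        even_rot_bij[OF rot_at_even[OF \<open>is_rotseq n xs\<close>]]]
    by (simp add: rot_at_snoc x)
  finally show ?case .
qed


lemma consistent_sym: "consistent n A B \<Longrightarrow> consistent n B A"
  unfolding consistent_def by blast

lemma gluing_transp: "gluing n (transpose 0 1)"
  unfolding gluing_def ports_set_def by (simp add: permutes_swap_id evenperm_swap)

lemma cons_S:
  assumes c: "consistent n A B" and wA: "wfg n A" and wB: "wfg n B"
    and s: "(u, p) \<in> S A" and uB: "u \<in> V B"
  shows "(u, p) \<in> S B"
proof (rule ccontr)
  assume ns: "(u, p) \<notin> S B"
  have uA: "u \<in> V A" and pP: "p \<in> ports_set n" using wA s unfolding wfg_def by auto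
  have P: "(0::nat) \<in> ports_set n" "(1::nat) \<in> ports_set n" unfolding ports_set_def by auto
  have "(u, p, transpose 0 1, u, 0) \<in> E B" "(u, p, transpose 0 1, u, 1) \<in> E B"
    using c uA uB pP P gluing_transp s ns unfolding consistent_def by blast+
  then show False using wB unfolding wfg_def by (metis zero_neq_one)
qed

lemma cons_E:
  assumes c: "consistent n A B" and wA: "wfg n A" and wB: "wfg n B"
    and e: "(u, p, \<gamma>, v, q) \<in> E A" and uB: "u \<in> V B"
  shows "(u, p, \<gamma>, v, q) \<in> E B"
proof -
  have h: "u \<in> V A" "v \<in> V A" "p \<in> ports_set n" "q \<in> ports_set n" "gluing n \<gamma>"
    using wA e unfolding wfg_def by fastforce+
  have "(u, p) \<notin> S A" using wA e unfolding wfg_def by blast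
  then have "(u, p) \<notin> S B" using cons_S[OF consistent_sym[OF c] wB wA _ h(1)] by blast
  then show ?thesis using c h uB e unfolding consistent_def by blast
qed

lemma wfg_rotate:
  assumes w: "wfg n G" and R: "\<And>x. even_rot n (R x)"
  shows "wfg n (rotate_by R G)"
proof -
  have inP: "R x p \<in> ports_set n" if "p \<in> ports_set n" for x p
    using R[of x] that unfolding even_rot_def by (simp add: permutes_in_image)
  have inj: "R x p = R x p' \<longleftrightarrow> p = p'" for x p p'
    using even_rot_bij[OF R[of x]] by (meson bij_def inj_eq)
  have g: "gluing n \<gamma> \<Longrightarrow> gluing n (R b \<circ> \<gamma> \<circ> inv (R a))" for \<gamma> a b
    using gluing_conj R by blast
  show ?thesis
    using w unfolding wfg_def rotate_by_def
    by (auto simp: inP inj g) (metis inj)+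
qed


lemma foldl_rot_map:
  "distinct xs \<Longrightarrow> foldl (\<lambda>acc (w, \<rho>). if w = u then \<rho> \<circ> acc else acc) a (map (\<lambda>x. (x, f x)) xs)
     = (if u \<in> set xs then f u \<circ> a else a)"
proof (induction xs arbitrary: a)
  case Nil then show ?case by simp
next
  case (Cons x xs)
  then show ?case by (cases "x = u") auto
qed

lemma rot_at_map: "distinct xs \<Longrightarrow> rot_at (map (\<lambda>x. (x, f x)) xs) u = (if u \<in> set xs then f u else id)"
  unfolding rot_at_def using foldl_rot_map[of xs u id f] by simp

lemma foldl_rot_noact:
  "u \<notin> fst ` set rs \<Longrightarrow> foldl (\<lambda>acc (w, \<rho>). if w = u then \<rho> \<circ> acc else acc) a rs = a"
proof (induction rs arbitrary: a)
  case Nil then show ?case by simp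
next
  case (Cons x xs)
  then show ?case by (cases x) auto
qed

lemma rot_at_noact: "\<not> acts_on rs u \<Longrightarrow> rot_at rs u = id"
  unfolding rot_at_def acts_on_def using foldl_rot_noact[of u rs id] by simp

lemma is_graph_rev:
  assumes "is_graph n G" "(u, p, \<gamma>, v, q) \<in> E G"
  shows "(v, q, inv \<gamma>, u, p) \<in> E G"
proof -
  have h: "\<forall>u p \<gamma> v q. (u, p, \<gamma>, v, q) \<in> E G \<longrightarrow>
          \<gamma> ` vports G u = vports G v \<and> \<gamma> p = q \<and> (v, q, inv \<gamma>, u, p) \<in> E G"
    using assms(1) unfolding is_graph_def by (elim conjE) assumption
  show ?thesis using h assms(2) by simp
qed

lemma wfg_E:
  assumes "wfg n G" "(u, p, \<gamma>, v, q) \<in> E G"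
  shows "u \<in> V G \<and> v \<in> V G \<and> p \<in> ports_set n \<and> q \<in> ports_set n \<and> gluing n \<gamma>"
proof -
  have h: "\<forall>(u, p, \<gamma>, v, q) \<in> E G. u \<in> V G \<and> v \<in> V G \<and> p \<in> ports_set n \<and>
          q \<in> ports_set n \<and> gluing n \<gamma>"
    using assms(1) unfolding wfg_def by (elim conjE) assumption
  show ?thesis using bspec[OF h assms(2)] by simp
qed

lemma wfg_S:
  assumes "wfg n G" "(u, p) \<in> S G"
  shows "u \<in> V G \<and> p \<in> ports_set n"
proof -
  have h: "\<forall>(u, p) \<in> S G. u \<in> V G \<and> p \<in> ports_set n"
    using assms(1) unfolding wfg_def by (elim conjE) assumption
  show ?thesis using bspec[OF h assms(2)] by simp
qed

theorem mainTheorem9: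
  fixes n k :: nat
    and G :: "nat \<Rightarrow> 'v graph"
    and r :: "nat \<Rightarrow> 'v rotseq"
  assumes "n \<ge> 1"
    and "\<And>i. i < k \<Longrightarrow> is_graph n (G i)"
    and "\<And>i j. i < k \<Longrightarrow> j < k \<Longrightarrow> i \<noteq> j \<Longrightarrow> consistent n (G i) (G j)"
    and "\<And>i. i < k \<Longrightarrow> is_rotseq n (r i)"
    and "\<And>i j. i < k \<Longrightarrow> j < k \<Longrightarrow> i \<noteq> j \<Longrightarrow> rotseq_consistent (r i) (r j)"
    and "\<And>i j. i < k \<Longrightarrow> j < k \<Longrightarrow> i \<noteq> j \<Longrightarrow>
           consistent n (apply_rotseq (r i) (G i)) (apply_rotseq (r j) (G j))"
  shows "\<exists>rr. is_rotseq n rr \<and>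
           graph_Union {..<k} (\<lambda>i. apply_rotseq (r i) (G i)) =
           apply_rotseq rr (graph_Union {..<k} G)"
proof -
  define Ri where "Ri i = rot_at (r i)" for i
  define H where "H i = apply_rotseq (r i) (G i)" for i
  define L where "L = concat (map (\<lambda>i. map fst (r i)) [0..<k])"
  define m where "m u = (LEAST j. j < k \<and> u \<in> V (G j))" for u
  define R where "R u = (if u \<in> set L \<and> (\<exists>j<k. u \<in> V (G j)) then Ri (m u) u else id)" for u
  define rr where "rr = map (\<lambda>u. (u, R u)) (remdups L)"
  have wG: "wfg n (G i)" if "i < k" for i using assms(2)[OF that] is_graph_wfg by blast
  have HR: "H i = rotate_by (Ri i) (G i)" if "i < k" for i
    unfolding H_def Ri_def using apply_rotseq_rotate_by[OF assms(4)[OF that]] .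
  have Rie: "even_rot n (Ri i u)" if "i < k" for i u
    unfolding Ri_def using rot_at_even[OF assms(4)[OF that]] .
  have wH: "wfg n (H i)" if "i < k" for i
    unfolding HR[OF that] using wfg_rotate[OF wG[OF that] Rie[OF that]] .
  have VH: "V (H i) = V (G i)" if "i < k" for i unfolding HR[OF that] rotate_by_def by simp
  have setL: "u \<in> set L \<longleftrightarrow> (\<exists>i<k. acts_on (r i) u)" for u
    unfolding L_def acts_on_def by force
  have F1: "m u < k \<and> u \<in> V (G (m u))" if "i < k" "u \<in> V (G i)" for i u
  proof -
    have "\<exists>j. j < k \<and> u \<in> V (G j)" using that by blast
    then show ?thesis unfolding m_def by (rule LeastI_ex)
  qed
  have F2: "R u = Ri (m u) u" if "i < k" "u \<in> V (G i)" for i u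
  proof (cases "u \<in> set L")
    case True then show ?thesis unfolding R_def using that by auto
  next
    case False
    then have "\<not> acts_on (r (m u)) u" using setL F1[OF that] by blast
    then show ?thesis using False unfolding R_def Ri_def by (simp add: rot_at_noact)
  qed
  have Re: "even_rot n (R u)" for u
  proof (cases "u \<in> set L \<and> (\<exists>j<k. u \<in> V (G j))")
    case True
    then obtain j where "j < k" "u \<in> V (G j)" by blast
    then show ?thesis using F2 F1 Rie by metis
  next
    case False then show ?thesis unfolding R_def by (simp only: if_False even_rot_id)
  qed
  have rotrr: "rot_at rr = R"
  proof
    fix u show "rot_at rr u = R u"
      unfolding rr_def by (simp add: rot_at_map R_def)
  qed
  have isrr: "is_rotseq n rr" unfolding is_rotseq_def rr_def using Re by auto
  have app: "apply_rotseq rr X = rotate_by R X" for X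
    using apply_rotseq_rotate_by[OF isrr] rotrr by simp
  have F4S: "(u, p) \<in> S (G j)" if "i < k" "j < k" "u \<in> V (G j)" "(u, p) \<in> S (G i)" for i j u p
    using that cons_S[OF assms(3) wG wG] by (cases "i = j") auto
  have F4E: "(u, p, \<gamma>, v, q) \<in> E (G j)" if "i < k" "j < k" "u \<in> V (G j)" "(u, p, \<gamma>, v, q) \<in> E (G i)"
    for i j u p \<gamma> v q
    using that cons_E[OF assms(3) wG wG] by (cases "i = j") auto
  have F4SH: "(u, p) \<in> S (H j)" if "i < k" "j < k" "u \<in> V (G j)" "(u, p) \<in> S (H i)" for i j u p
    using that cons_S[OF assms(6)[folded H_def] wH wH] VH by (cases "i = j") auto
  have F4EH: "(u, p, \<gamma>, v, q) \<in> E (H j)" if "i < k" "j < k" "u \<in> V (G j)" "(u, p, \<gamma>, v, q) \<in> E (H i)"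
    for i j u p \<gamma> v q
    using that cons_E[OF assms(6)[folded H_def] wH wH] VH by (cases "i = j") auto
  have F3: "m u = m v" if "i < k" "(u, p, \<gamma>, v, q) \<in> E (G i)" for i u p \<gamma> v q
  proof -
    have rev: "(v, q, inv \<gamma>, u, p) \<in> E (G i)" using is_graph_rev[OF assms(2)[OF that(1)] that(2)] .
    have "u \<in> V (G j) \<longleftrightarrow> v \<in> V (G j)" if "j < k" for j
    proof
      assume "u \<in> V (G j)"
      then have "(u, p, \<gamma>, v, q) \<in> E (G j)" using F4E \<open>i < k\<close> \<open>j < k\<close> \<open>(u, p, \<gamma>, v, q) \<in> E (G i)\<close> by blast
      then show "v \<in> V (G j)" using wfg_E[OF wG[OF \<open>j < k\<close>]] by blast
    next
      assume "v \<in> V (G j)"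
      then have "(v, q, inv \<gamma>, u, p) \<in> E (G j)" using F4E \<open>i < k\<close> \<open>j < k\<close> rev by blast
      then show "u \<in> V (G j)" using wfg_E[OF wG[OF \<open>j < k\<close>]] by blast
    qed
    then have "(\<lambda>j. j < k \<and> u \<in> V (G j)) = (\<lambda>j. j < k \<and> v \<in> V (G j))" by blast
    then show ?thesis unfolding m_def by simp
  qed
  have uS: "u \<in> V (G i)" if "i < k" "(u, p) \<in> S (G i)" for i u p
    using wfg_S[OF wG[OF that(1)] that(2)] by blast
  have uE: "u \<in> V (G i) \<and> v \<in> V (G i)" if "i < k" "(u, p, \<gamma>, v, q) \<in> E (G i)" for i u p \<gamma> v q
    using wfg_E[OF wG[OF that(1)] that(2)] by blast
  have eS: "(\<Union>i<k. S (H i)) = (\<lambda>(a, p). (a, R a p)) ` (\<Union>i<k. S (G i))"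
  proof
    show "(\<Union>i<k. S (H i)) \<subseteq> (\<lambda>(a, p). (a, R a p)) ` (\<Union>i<k. S (G i))"
    proof
      fix x assume "x \<in> (\<Union>i<k. S (H i))"
      then obtain i where i: "i < k" "x \<in> S (H i)" by blast
      then obtain u p where x: "x = (u, Ri i u p)" "(u, p) \<in> S (G i)"
        unfolding HR[OF i(1)] rotate_by_def by auto
      have u: "u \<in> V (G i)" using uS i(1) x(2) .
      note m1 = F1[OF i(1) u]
      have "x \<in> S (H (m u))" using F4SH[OF i(1) conjunct1[OF m1] conjunct2[OF m1]] i(2) x(1) by simp
      then obtain u' p' where x': "x = (u', Ri (m u) u' p')" "(u', p') \<in> S (G (m u))"
        unfolding HR[OF conjunct1[OF m1]] rotate_by_def by auto
      have "u' = u" using x x' by simp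
      then have "x = (u, R u p')" using x' F2[OF i(1) u] by simp
      then show "x \<in> (\<lambda>(a, p). (a, R a p)) ` (\<Union>i<k. S (G i))"
        using x' \<open>u' = u\<close> m1 by force
    qed
  next
    show "(\<lambda>(a, p). (a, R a p)) ` (\<Union>i<k. S (G i)) \<subseteq> (\<Union>i<k. S (H i))"
    proof
      fix x assume "x \<in> (\<lambda>(a, p). (a, R a p)) ` (\<Union>i<k. S (G i))"
      then obtain i u p where i: "i < k" "(u, p) \<in> S (G i)" and x: "x = (u, R u p)" by auto
      have u: "u \<in> V (G i)" using uS i .
      note m1 = F1[OF i(1) u]
      have "(u, p) \<in> S (G (m u))" using F4S[OF i(1) conjunct1[OF m1] conjunct2[OF m1] i(2)] .
      then have "x \<in> S (H (m u))" unfolding HR[OF conjunct1[OF m1]] rotate_by_def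
        using x F2[OF i(1) u] by force
      then show "x \<in> (\<Union>i<k. S (H i))" using m1 by blast
    qed
  qed
  have eE: "(\<Union>i<k. E (H i)) = (\<lambda>(a, p, \<gamma>, b, q). (a, R a p, R b \<circ> \<gamma> \<circ> inv (R a), b, R b q)) ` (\<Union>i<k. E (G i))"
  proof
    show "(\<Union>i<k. E (H i)) \<subseteq> (\<lambda>(a, p, \<gamma>, b, q). (a, R a p, R b \<circ> \<gamma> \<circ> inv (R a), b, R b q)) ` (\<Union>i<k. E (G i))"
    proof
      fix x assume "x \<in> (\<Union>i<k. E (H i))"
      then obtain i where i: "i < k" "x \<in> E (H i)" by blast
      then obtain u p \<gamma> v q where x: "x = (u, Ri i u p, Ri i v \<circ> \<gamma> \<circ> inv (Ri i u), v, Ri i v q)"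
          "(u, p, \<gamma>, v, q) \<in> E (G i)"
        unfolding HR[OF i(1)] rotate_by_def by auto
      have u: "u \<in> V (G i)" using uE i(1) x(2) by blast
      note m1 = F1[OF i(1) u]
      have "x \<in> E (H (m u))" using F4EH[OF i(1) conjunct1[OF m1] conjunct2[OF m1]] i(2) x(1) by simp
      then obtain u' p' \<gamma>' v' q' where x': "x = (u', Ri (m u) u' p', Ri (m u) v' \<circ> \<gamma>' \<circ> inv (Ri (m u) u'), v', Ri (m u) v' q')"
          "(u', p', \<gamma>', v', q') \<in> E (G (m u))"
        unfolding HR[OF conjunct1[OF m1]] rotate_by_def by auto
      have uu: "u' = u" using x x' by simp
      have e2: "(u, p', \<gamma>', v', q') \<in> E (G (m u))" using x'(2) uu by simp
      have mv: "m v' = m u" using F3[OF conjunct1[OF m1] e2] by simp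
      have v': "v' \<in> V (G (m u))" using uE[OF conjunct1[OF m1] e2] by blast
      have "R u = Ri (m u) u" using F2[OF i(1) u] .
      moreover have "R v' = Ri (m u) v'" using F2[OF conjunct1[OF m1] v'] mv by simp
      ultimately have "x = (u, R u p', R v' \<circ> \<gamma>' \<circ> inv (R u), v', R v' q')" using x' uu by simp
      then show "x \<in> (\<lambda>(a, p, \<gamma>, b, q). (a, R a p, R b \<circ> \<gamma> \<circ> inv (R a), b, R b q)) ` (\<Union>i<k. E (G i))"
        using e2 m1 by force
    qed
  next
    show "(\<lambda>(a, p, \<gamma>, b, q). (a, R a p, R b \<circ> \<gamma> \<circ> inv (R a), b, R b q)) ` (\<Union>i<k. E (G i)) \<subseteq> (\<Union>i<k. E (H i))"
    proof
      fix x assume "x \<in> (\<lambda>(a, p, \<gamma>, b, q). (a, R a p, R b \<circ> \<gamma> \<circ> inv (R a), b, R b q)) ` (\<Union>i<k. E (G i))"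
      then obtain i u p \<gamma> v q where i: "i < k" "(u, p, \<gamma>, v, q) \<in> E (G i)"
        and x: "x = (u, R u p, R v \<circ> \<gamma> \<circ> inv (R u), v, R v q)" by auto
      have u: "u \<in> V (G i)" using uE i by blast
      note m1 = F1[OF i(1) u]
      have e2: "(u, p, \<gamma>, v, q) \<in> E (G (m u))" using F4E[OF i(1) conjunct1[OF m1] conjunct2[OF m1] i(2)] .
      have mv: "m v = m u" using F3[OF i] by simp
      have v: "v \<in> V (G i)" using uE i by blast
      have "R u = Ri (m u) u" using F2[OF i(1) u] .
      moreover have "R v = Ri (m u) v" using F2[OF i(1) v] mv by simp
      ultimately have "x = (u, Ri (m u) u p, Ri (m u) v \<circ> \<gamma> \<circ> inv (Ri (m u) u), v, Ri (m u) v q)" using x by simp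
      then have "x \<in> E (H (m u))" unfolding HR[OF conjunct1[OF m1]] rotate_by_def
        using e2 by force
      then show "x \<in> (\<Union>i<k. E (H i))" using m1 by blast
    qed
  qed
  have "graph_Union {..<k} H = rotate_by R (graph_Union {..<k} G)"
    unfolding graph_Union_def rotate_by_def using eS eE VH by simp
  then show ?thesis using isrr app[of "graph_Union {..<k} G"] unfolding H_def by auto
qed

end
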